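(* Let $(W,S)$ be a Coxeter system whose Davis complex $\Sigma(W,S)$ is two-dimensional, and suppose that for every $t\in S$ the (unweighted, $\mathbf{q}=\mathbf{1}$) reduced $L^2$-homology $L^2_\mathbf{1}H_i(\Omega(S,\{t\}),\partial\Omega(S,\{t\}))$ vanishes for all $i\neq 1$. Then $L^2_\mathbf{q}H_2(\Sigma(W,S))=0$ for every multiparameter $\mathbf{q}\le\mathbf{1}$ (i.e. $q_s\le 1$ for all $s\in S$).
   Context: A Coxeter system $(W,S)$; $U\subseteq S$ is spherical if $\langle U\rangle$ is finite. A multiparameter is $\mathbf{q}=(q_s)_{s\in S}$, $q_s>0$, constant on conjugacy classes; $\mathbf{1}$ is the all-ones multiparameter. The Coxeter cellulation of the Davis complex has cells $wc_U$ ($w\in W$, $U$ spherical) of dimension $|U|$. The $(S,T)$-ruin for spherical $T$: $\Omega(S,T)$ is the union of closed Coxeter cells of type $T'\supseteq T$ ($T'$ spherical), and $\partial\Omega(S,T)$ consists of the cells of $\Omega(S,T)$ whose type does not contain $T$. Weighted $L^2$-homology: cell $w\sigma$ gets measure $q_u$, $u$ the shortest element of $wW_{S(\sigma)}$; chains are square-summable for $\sum f(\sigma)g(\sigma)\mu_\mathbf{q}(\sigma)$; $\partial^\mathbf{q}$ is the adjoint of the coboundary; reduced homology $\ker\partial^\mathbf{q}/\overline{\operatorname{im}\partial^\mathbf{q}}$ (relative version for pairs). *)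

theory Defs
  imports "HOL-Algebra.Multiplicative_Group" "HOL-Algebra.Generated_Groups"
          "HOL-Analysis.Infinite_Sum"
begin

definition wprod :: "('a, 'b) monoid_scheme \<Rightarrow> 'a list \<Rightarrow> 'a" where
  "wprod G xs = foldr (\<lambda>x y. x \<otimes>\<^bsub>G\<^esub> y) xs \<one>\<^bsub>G\<^esub>"

text \<open>Coxeter relators: the words (s t)^m(s,t) with m(s,t) the (finite) order of s t;
  for s = t this is the word s s.\<close>
definition cox_relator :: "('a, 'b) monoid_scheme \<Rightarrow> 'a set \<Rightarrow> 'a list \<Rightarrow> bool" where
  "cox_relator G S r \<longleftrightarrow> (\<exists>s\<in>S. \<exists>t\<in>S. group.ord G (s \<otimes>\<^bsub>G\<^esub> t) > 0 \<and>
       r = concat (replicate (group.ord G (s \<otimes>\<^bsub>G\<^esub> t)) [s, t]))"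

definition cox_step :: "('a, 'b) monoid_scheme \<Rightarrow> 'a set \<Rightarrow> 'a list \<Rightarrow> 'a list \<Rightarrow> bool" where
  "cox_step G S x y \<longleftrightarrow> (\<exists>u v r. cox_relator G S r \<and> x = u @ r @ v \<and> y = u @ v)"

text \<open>(G,S) is a Coxeter system: S is a finite set of involutions generating G, and G is
  presented by S subject to the Coxeter relations (s t)^m(s,t) = 1 (m(s,t) finite): every
  word over S representing 1 can be reduced to the empty word by inserting/deleting relators.\<close>
definition coxeter_system :: "('a, 'b) monoid_scheme \<Rightarrow> 'a set \<Rightarrow> bool" where
  "coxeter_system G S \<longleftrightarrow> group G \<and> finite S \<and> S \<subseteq> carrier G \<and> \<one>\<^bsub>G\<^esub> \<notin> S \<and>
     (\<forall>s\<in>S. s \<otimes>\<^bsub>G\<^esub> s = \<one>\<^bsub>G\<^esub>) \<and> generate G S = carrier G \<and>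
     (\<forall>xs \<in> lists S. wprod G xs = \<one>\<^bsub>G\<^esub> \<longrightarrow> equivclp (cox_step G S) xs [])"

definition spherical :: "('a, 'b) monoid_scheme \<Rightarrow> 'a set \<Rightarrow> bool" where
  "spherical G U \<longleftrightarrow> finite (generate G U)"

text \<open>Dimension of the Davis complex = max cardinality of a spherical subset.\<close>
definition davis_dim_two :: "('a, 'b) monoid_scheme \<Rightarrow> 'a set \<Rightarrow> bool" where
  "davis_dim_two G S \<longleftrightarrow> (\<exists>U\<subseteq>S. spherical G U \<and> card U = 2) \<and>
     (\<forall>U\<subseteq>S. spherical G U \<longrightarrow> card U \<le> 2)"

definition wlen :: "('a, 'b) monoid_scheme \<Rightarrow> 'a set \<Rightarrow> 'a \<Rightarrow> nat" where
  "wlen G S w = (LEAST n. \<exists>xs\<in>lists S. length xs = n \<and> wprod G xs = w)"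

text \<open>Shortest element of a coset (unique for cosets of special subgroups).\<close>
definition cmin :: "('a, 'b) monoid_scheme \<Rightarrow> 'a set \<Rightarrow> 'a set \<Rightarrow> 'a" where
  "cmin G S A = (SOME a. a \<in> A \<and> (\<forall>b\<in>A. wlen G S a \<le> wlen G S b))"

definition multiparameter :: "('a, 'b) monoid_scheme \<Rightarrow> 'a set \<Rightarrow> ('a \<Rightarrow> real) \<Rightarrow> bool" where
  "multiparameter G S q \<longleftrightarrow> (\<forall>s\<in>S. q s > 0) \<and>
     (\<forall>s\<in>S. \<forall>t\<in>S. (\<exists>w\<in>carrier G. t = w \<otimes>\<^bsub>G\<^esub> s \<otimes>\<^bsub>G\<^esub> inv\<^bsub>G\<^esub> w) \<longrightarrow> q s = q t)"

definition qpow :: "('a, 'b) monoid_scheme \<Rightarrow> 'a set \<Rightarrow> ('a \<Rightarrow> real) \<Rightarrow> 'a \<Rightarrow> real" where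
  "qpow G S q w = (SOME r. \<exists>xs\<in>lists S. length xs = wlen G S w \<and> wprod G xs = w \<and>
                              r = prod_list (map q xs))"

text \<open>A cell w c_U is represented by the pair (w W_U, U); its dimension is card U.\<close>
type_synonym 'a cell = "'a set \<times> 'a set"

definition cox_cells :: "('a, 'b) monoid_scheme \<Rightarrow> 'a set \<Rightarrow> nat \<Rightarrow> 'a cell set" where
  "cox_cells G S i = {(w <#\<^bsub>G\<^esub> generate G U, U) | w U.
       w \<in> carrier G \<and> U \<subseteq> S \<and> spherical G U \<and> card U = i}"

text \<open>A fixed linear order on S (any injection into nat), used to orient the cells.\<close>
definition sorder :: "'a set \<Rightarrow> 'a \<Rightarrow> nat" where
  "sorder S = (SOME r. inj_on r S)"

definition spos :: "'a set \<Rightarrow> 'a set \<Rightarrow> 'a \<Rightarrow> nat" where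
  "spos S U s = card {t\<in>U. sorder S t < sorder S s}"

text \<open>Incidence numbers of the cellular chain complex (Davis):
  d(w c_T) = sum_{s in T} (-1)^{pos(s)} sum_{u in W_T^{T-s}} (-1)^{l(u)} w u c_{T-s},
  with w the shortest element of w W_T (so that l(wu) = l(w) + l(u)).\<close>
definition cox_inc :: "('a, 'b) monoid_scheme \<Rightarrow> 'a set \<Rightarrow> 'a cell \<Rightarrow> 'a cell \<Rightarrow> real" where
  "cox_inc G S \<tau> \<sigma> =
     (if (\<exists>s\<in>snd \<tau>. snd \<sigma> = snd \<tau> - {s}) \<and> fst \<sigma> \<subseteq> fst \<tau>
      then (-1) ^ (spos S (snd \<tau>) (THE s. s \<in> snd \<tau> \<and> snd \<sigma> = snd \<tau> - {s})
                   + wlen G S (cmin G S (fst \<sigma>)) + wlen G S (cmin G S (fst \<tau>)))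
      else 0)"

definition cell_meas :: "('a, 'b) monoid_scheme \<Rightarrow> 'a set \<Rightarrow> ('a \<Rightarrow> real) \<Rightarrow> 'a cell \<Rightarrow> real" where
  "cell_meas G S q \<sigma> = qpow G S q (cmin G S (fst \<sigma>))"

text \<open>C i: cells of dimension i counted in the (relative) chain complex; \<mu>: measure;
  inc: incidence numbers.\<close>
definition l2chains :: "(nat \<Rightarrow> 'c set) \<Rightarrow> ('c \<Rightarrow> real) \<Rightarrow> nat \<Rightarrow> ('c \<Rightarrow> real) set" where
  "l2chains C \<mu> i = {f. (\<forall>\<sigma>. \<sigma> \<notin> C i \<longrightarrow> f \<sigma> = 0) \<and>
                        (\<lambda>\<sigma>. (f \<sigma>)\<^sup>2 * \<mu> \<sigma>) summable_on C i}"

definition l2normsq :: "(nat \<Rightarrow> 'c set) \<Rightarrow> ('c \<Rightarrow> real) \<Rightarrow> nat \<Rightarrow> ('c \<Rightarrow> real) \<Rightarrow> real" where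
  "l2normsq C \<mu> i f = (\<Sum>\<^sub>\<infinity>\<sigma>\<in>C i. (f \<sigma>)\<^sup>2 * \<mu> \<sigma>)"

text \<open>The weighted boundary \<partial>^q: adjoint of the coboundary
  (\<delta>f)(\<tau>) = \<Sum>_\<sigma> [\<tau>:\<sigma>] f(\<sigma>) w.r.t. the weighted inner products.\<close>
definition wbd :: "(nat \<Rightarrow> 'c set) \<Rightarrow> ('c \<Rightarrow> real) \<Rightarrow> ('c \<Rightarrow> 'c \<Rightarrow> real) \<Rightarrow> nat
                    \<Rightarrow> ('c \<Rightarrow> real) \<Rightarrow> 'c \<Rightarrow> real" where
  "wbd C \<mu> inc i g \<sigma> =
     (if i = 0 \<or> \<sigma> \<notin> C (i - 1) then 0
      else (1 / \<mu> \<sigma>) * (\<Sum>\<tau>\<in>{\<tau>\<in>C i. inc \<tau> \<sigma> \<noteq> 0}. inc \<tau> \<sigma> * g \<tau> * \<mu> \<tau>))"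

text \<open>Reduced L^2 homology ker \<partial>_i / closure(im \<partial>_{i+1}) vanishes.\<close>
definition red_l2_hom_vanishes ::
    "(nat \<Rightarrow> 'c set) \<Rightarrow> ('c \<Rightarrow> real) \<Rightarrow> ('c \<Rightarrow> 'c \<Rightarrow> real) \<Rightarrow> nat \<Rightarrow> bool" where
  "red_l2_hom_vanishes C \<mu> inc i \<longleftrightarrow>
     (\<forall>f\<in>l2chains C \<mu> i. (\<forall>\<sigma>. wbd C \<mu> inc i f \<sigma> = 0) \<longrightarrow>
        (\<forall>\<epsilon>>0. \<exists>g\<in>l2chains C \<mu> (Suc i).
            l2normsq C \<mu> i (\<lambda>\<sigma>. f \<sigma> - wbd C \<mu> inc (Suc i) g \<sigma>) < \<epsilon>))"

definition davis_l2H_zero :: "('a, 'b) monoid_scheme \<Rightarrow> 'a set \<Rightarrow> ('a \<Rightarrow> real) \<Rightarrow> nat \<Rightarrow> bool" where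
  "davis_l2H_zero G S q i = red_l2_hom_vanishes (cox_cells G S) (cell_meas G S q) (cox_inc G S) i"

text \<open>Relative cells of the pair (\<Omega>(S,T), \<partial>\<Omega>(S,T)): cells of \<Omega>(S,T) not in \<partial>\<Omega>(S,T),
  i.e. cells whose (spherical) type contains T.\<close>
definition ruin_rel_cells :: "('a, 'b) monoid_scheme \<Rightarrow> 'a set \<Rightarrow> 'a set \<Rightarrow> nat \<Rightarrow> 'a cell set" where
  "ruin_rel_cells G S T i = {\<sigma>\<in>cox_cells G S i. T \<subseteq> snd \<sigma>}"

definition ruin_l2H_zero :: "('a, 'b) monoid_scheme \<Rightarrow> 'a set \<Rightarrow> 'a set \<Rightarrow> ('a \<Rightarrow> real) \<Rightarrow> nat \<Rightarrow> bool" where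
  "ruin_l2H_zero G S T q i = red_l2_hom_vanishes (ruin_rel_cells G S T) (cell_meas G S q) (cox_inc G S) i"

end

theory Submission
  imports Defs
begin

lemma wprod_carrier:
  assumes "group G" "set xs \<subseteq> carrier G"
  shows "wprod G xs \<in> carrier G"
  using assms(2)
proof (induction xs)
  case Nil then show ?case using assms(1) by (simp add: wprod_def group.is_monoid monoid.one_closed)
next
  case (Cons a xs) then show ?case using assms(1)
    by (simp add: wprod_def group.is_monoid monoid.m_closed)
qed

lemma wprod_append:
  assumes "group G" "set xs \<subseteq> carrier G" "set ys \<subseteq> carrier G"
  shows "wprod G (xs @ ys) = wprod G xs \<otimes>\<^bsub>G\<^esub> wprod G ys"
  using assms(2)
proof (induction xs)
  case Nil
  have "wprod G ys \<in> carrier G" using wprod_carrier assms by blast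
  then show ?case using assms(1) by (simp add: wprod_def group.is_monoid monoid.l_one)
next
  case (Cons a xs)
  have c1: "wprod G xs \<in> carrier G" "wprod G ys \<in> carrier G" using wprod_carrier assms Cons by auto
  have "wprod G ((a # xs) @ ys) = a \<otimes>\<^bsub>G\<^esub> wprod G (xs @ ys)" by (simp add: wprod_def)
  also have "\<dots> = a \<otimes>\<^bsub>G\<^esub> (wprod G xs \<otimes>\<^bsub>G\<^esub> wprod G ys)" using Cons by simp
  also have "\<dots> = (a \<otimes>\<^bsub>G\<^esub> wprod G xs) \<otimes>\<^bsub>G\<^esub> wprod G ys"
    using c1 Cons.prems assms(1) by (simp add: group.is_monoid monoid.m_assoc)
  finally show ?case by (simp add: wprod_def)
qed

lemma gen_word:
  assumes cs: "coxeter_system G S" and x: "x \<in> generate G S"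
  shows "\<exists>xs\<in>lists S. wprod G xs = x"
  using x
proof (induction rule: generate.induct)
  case one then show ?case by (intro bexI[of _ "[]"]) (auto simp: wprod_def)
next
  case (incl h)
  have "h \<in> carrier G" "group G" using incl cs by (auto simp: coxeter_system_def)
  then show ?case using incl
    by (intro bexI[of _ "[h]"]) (auto simp: wprod_def group.is_monoid monoid.r_one)
next
  case (inv h)
  have g: "h \<in> carrier G" "group G" "h \<otimes>\<^bsub>G\<^esub> h = \<one>\<^bsub>G\<^esub>" using inv cs by (auto simp: coxeter_system_def)
  then have "inv\<^bsub>G\<^esub> h = h" by (metis group.inv_equality)
  then show ?case using inv g
    by (intro bexI[of _ "[h]"]) (auto simp: wprod_def group.is_monoid monoid.r_one)
next
  case (eng h1 h2)
  then obtain xs ys where xs: "xs \<in> lists S" "wprod G xs = h1" and ys: "ys \<in> lists S" "wprod G ys = h2"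
    by blast
  have g: "group G" "S \<subseteq> carrier G" using cs by (auto simp: coxeter_system_def)
  have "wprod G (xs @ ys) = h1 \<otimes>\<^bsub>G\<^esub> h2"
  proof -
    have "set xs \<subseteq> carrier G" "set ys \<subseteq> carrier G" using xs(1) ys(1) g(2) by auto
    then show ?thesis using wprod_append[OF g(1)] xs(2) ys(2) by simp
  qed
  then show ?case using xs ys by (intro bexI[of _ "xs @ ys"]) auto
qed

lemma qpow_form:
  assumes cs: "coxeter_system G S" and x: "x \<in> carrier G"
  shows "\<exists>xs\<in>lists S. qpow G S q x = prod_list (map q xs)"
proof -
  have "x \<in> generate G S" using cs x by (simp add: coxeter_system_def)
  then obtain ys where ys: "ys \<in> lists S" "wprod G ys = x" using gen_word[OF cs] by blast
  have ex: "\<exists>n. \<exists>xs\<in>lists S. length xs = n \<and> wprod G xs = x" using ys by blast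
  have "\<exists>xs\<in>lists S. length xs = wlen G S x \<and> wprod G xs = x"
    unfolding wlen_def by (rule LeastI_ex[OF ex])
  then have "\<exists>r. \<exists>xs\<in>lists S. length xs = wlen G S x \<and> wprod G xs = x \<and> r = prod_list (map q xs)"
    by blast
  from someI_ex[OF this] show ?thesis unfolding qpow_def by blast
qed

lemma prod_list_bounds:
  assumes "xs \<in> lists S" "\<forall>s\<in>S. 0 < q s \<and> q s \<le> (1::real)"
  shows "0 < prod_list (map q xs) \<and> prod_list (map q xs) \<le> 1"
  using assms(1)
proof (induction xs)
  case Nil then show ?case by simp
next
  case (Cons a xs)
  then have a: "0 < q a" "q a \<le> 1" using assms(2) by auto
  from Cons have "0 < prod_list (map q xs)" "prod_list (map q xs) \<le> 1" by auto
  with a show ?case by (auto intro: mult_le_one)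
qed

lemma prod_list_one: "prod_list (map (\<lambda>_. 1::real) xs) = 1"
  by (induction xs) auto

lemma cmin_in:
  assumes "a \<in> A"
  shows "cmin G S A \<in> A"
proof -
  define b where "b = arg_min (wlen G S) (\<lambda>x. x \<in> A)"
  have b: "b \<in> A" "\<forall>c\<in>A. wlen G S b \<le> wlen G S c"
    unfolding b_def using assms by (auto intro: arg_min_natI arg_min_nat_le)
  then have "\<exists>a. a \<in> A \<and> (\<forall>c\<in>A. wlen G S a \<le> wlen G S c)" by blast
  from someI_ex[OF this] show ?thesis unfolding cmin_def by blast
qed

lemma cell_cmin_carrier:
  assumes cs: "coxeter_system G S" and s: "\<sigma> \<in> cox_cells G S i"
  shows "cmin G S (fst \<sigma>) \<in> carrier G"
proof -
  obtain w U where wU: "\<sigma> = (w <#\<^bsub>G\<^esub> generate G U, U)" "w \<in> carrier G" "U \<subseteq> S"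
    using s unfolding cox_cells_def mem_Collect_eq by (elim exE conjE) (rule that; assumption)
  have g: "group G" "S \<subseteq> carrier G" using cs by (auto simp: coxeter_system_def)
  have "U \<subseteq> carrier G" using g(2) wU(3) by blast
  then have sg: "subgroup (generate G U) G" using group.generate_is_subgroup[OF g(1)] by blast
  have one: "\<one>\<^bsub>G\<^esub> \<in> generate G U" by (rule generate.one)
  have wo: "w \<otimes>\<^bsub>G\<^esub> \<one>\<^bsub>G\<^esub> = w" using wU(2) g(1) by (simp add: group.is_monoid monoid.r_one)
  have "w \<in> w <#\<^bsub>G\<^esub> generate G U"
    unfolding l_coset_def using one wo by blast
  then have c: "cmin G S (fst \<sigma>) \<in> w <#\<^bsub>G\<^esub> generate G U" using cmin_in wU(1) by (metis fst_conv)
  have "w <#\<^bsub>G\<^esub> generate G U \<subseteq> carrier G"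
    using group.l_coset_subset_G[OF g(1) subgroup.subset[OF sg] wU(2)] .
  then show ?thesis using c by blast
qed

lemma meas_bounds:
  assumes cs: "coxeter_system G S" and s: "\<sigma> \<in> cox_cells G S i"
    and q: "\<forall>s\<in>S. 0 < q s \<and> q s \<le> 1"
  shows "0 < cell_meas G S q \<sigma> \<and> cell_meas G S q \<sigma> \<le> 1"
proof -
  obtain xs where xs: "xs \<in> lists S" "qpow G S q (cmin G S (fst \<sigma>)) = prod_list (map q xs)"
    using qpow_form[OF cs cell_cmin_carrier[OF cs s], of q] by blast
  show ?thesis unfolding cell_meas_def xs(2) by (rule prod_list_bounds[OF xs(1) q])
qed

lemma meas_one:
  assumes cs: "coxeter_system G S" and s: "\<sigma> \<in> cox_cells G S i"
  shows "cell_meas G S (\<lambda>_. 1) \<sigma> = 1"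
proof -
  obtain xs where xs: "xs \<in> lists S" "qpow G S (\<lambda>_. 1) (cmin G S (fst \<sigma>)) = prod_list (map (\<lambda>_. 1::real) xs)"
    using qpow_form[OF cs cell_cmin_carrier[OF cs s], of "\<lambda>_. 1"] by blast
  show ?thesis unfolding cell_meas_def xs(2) by (rule prod_list_one)
qed

lemma no_3cells:
  assumes "davis_dim_two G S"
  shows "cox_cells G S 3 = {}"
proof (rule equals0I)
  fix \<sigma> assume "\<sigma> \<in> cox_cells G S 3"
  then obtain w U where "U \<subseteq> S" "spherical G U" "card U = 3"
    unfolding cox_cells_def mem_Collect_eq by (elim exE conjE) (rule that; assumption)
  moreover have "\<forall>U\<subseteq>S. spherical G U \<longrightarrow> card U \<le> 2" using assms unfolding davis_dim_two_def by blast
  ultimately show False by auto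
qed

theorem corollary6p5:
  fixes G :: "('a, 'b) monoid_scheme" and S :: "'a set"
  assumes "coxeter_system G S"
    and "davis_dim_two G S"
    and "\<forall>t\<in>S. \<forall>i. i \<noteq> 1 \<longrightarrow> ruin_l2H_zero G S {t} (\<lambda>_. 1) i"
  shows "\<forall>q. multiparameter G S q \<and> (\<forall>s\<in>S. q s \<le> 1) \<longrightarrow> davis_l2H_zero G S q 2"
proof (intro allI impI)
  fix q assume qa: "multiparameter G S q \<and> (\<forall>s\<in>S. q s \<le> 1)"
  have qb: "\<forall>s\<in>S. 0 < q s \<and> q s \<le> 1" using qa by (auto simp: multiparameter_def)
  define C where "C = cox_cells G S"
  define \<mu> where "\<mu> = cell_meas G S q"
  define inc where "inc = cox_inc G S"
  have mub: "\<And>\<sigma> i. \<sigma> \<in> C i \<Longrightarrow> 0 < \<mu> \<sigma> \<and> \<mu> \<sigma> \<le> 1"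
    using meas_bounds[OF assms(1) _ qb] unfolding C_def \<mu>_def by blast
  show "davis_l2H_zero G S q 2"
    unfolding davis_l2H_zero_def red_l2_hom_vanishes_def C_def[symmetric] \<mu>_def[symmetric]
      inc_def[symmetric]
  proof (intro ballI impI allI)
    fix f :: "'a cell \<Rightarrow> real" and \<epsilon> :: real
    assume fl: "f \<in> l2chains C \<mu> 2" and cyc: "\<forall>\<sigma>. wbd C \<mu> inc 2 f \<sigma> = 0" and eps: "\<epsilon> > 0"
    have f0: "\<forall>\<sigma>. \<sigma> \<notin> C 2 \<longrightarrow> f \<sigma> = 0" and fs: "(\<lambda>\<sigma>. (f \<sigma>)\<^sup>2 * \<mu> \<sigma>) summable_on C 2"
      using fl by (auto simp: l2chains_def)
    have key: "f \<tau> = 0" if \<tau>: "\<tau> \<in> C 2" for \<tau>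
    proof -
      obtain U where U: "snd \<tau> = U" "U \<subseteq> S" "card U = 2"
        using \<tau> by (auto simp: C_def cox_cells_def)
      then obtain t where t: "t \<in> snd \<tau>" by fastforce
      have tS: "t \<in> S" using t U by auto
      define R where "R = ruin_rel_cells G S {t}"
      define \<mu>1 where "\<mu>1 = cell_meas G S (\<lambda>_. 1)"
      have RC: "\<And>i. R i \<subseteq> C i" by (auto simp: R_def ruin_rel_cells_def C_def)
      have mu1: "\<And>\<sigma> i. \<sigma> \<in> R i \<Longrightarrow> \<mu>1 \<sigma> = 1"
        using meas_one[OF assms(1)] RC unfolding \<mu>1_def C_def by blast
      have R3: "R 3 = {}" using RC[of 3] no_3cells[OF assms(2)] C_def by auto
      define h where "h = (\<lambda>\<sigma>. if \<sigma> \<in> R 2 then f \<sigma> * \<mu> \<sigma> else 0)"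
      have hyp: "red_l2_hom_vanishes R \<mu>1 inc 2"
        using assms(3) tS unfolding ruin_l2H_zero_def R_def \<mu>1_def inc_def by auto
      have hs: "(\<lambda>\<sigma>. (h \<sigma>)\<^sup>2 * \<mu>1 \<sigma>) summable_on R 2"
      proof (rule summable_on_comparison_test)
        show "(\<lambda>\<sigma>. (f \<sigma>)\<^sup>2 * \<mu> \<sigma>) summable_on R 2"
          using summable_on_subset_banach[OF fs RC] .
      next
        fix x assume x: "x \<in> R 2"
        have m: "0 < \<mu> x" "\<mu> x \<le> 1" using mub RC x by blast+
        have "(f x)\<^sup>2 * (\<mu> x * \<mu> x) \<le> (f x)\<^sup>2 * \<mu> x"
          using m by (intro mult_left_mono) (auto intro: mult_right_le_one_le)
        then show "(h x)\<^sup>2 * \<mu>1 x \<le> (f x)\<^sup>2 * \<mu> x"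
          using x mu1 by (simp add: h_def power2_eq_square algebra_simps)
      next
        fix x assume x: "x \<in> R 2"
        show "0 \<le> (h x)\<^sup>2 * \<mu>1 x" using mu1 x by simp
      qed
      have hl: "h \<in> l2chains R \<mu>1 2" using hs by (auto simp: l2chains_def h_def)
      have hc: "\<forall>\<sigma>. wbd R \<mu>1 inc 2 h \<sigma> = 0"
      proof
        fix \<sigma>
        show "wbd R \<mu>1 inc 2 h \<sigma> = 0"
        proof (cases "\<sigma> \<in> R 1")
          case False then show ?thesis by (simp add: wbd_def)
        next
          case True
          have \<sigma>C: "\<sigma> \<in> C 1" using True RC by blast
          have tsig: "t \<in> snd \<sigma>" using True by (auto simp: R_def ruin_rel_cells_def)
          have sets: "{\<tau>\<in>R 2. inc \<tau> \<sigma> \<noteq> 0} = {\<tau>\<in>C 2. inc \<tau> \<sigma> \<noteq> 0}"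
          proof (intro equalityI subsetI)
            fix x assume "x \<in> {\<tau>\<in>R 2. inc \<tau> \<sigma> \<noteq> 0}" then show "x \<in> {\<tau>\<in>C 2. inc \<tau> \<sigma> \<noteq> 0}"
              using RC by blast
          next
            fix x assume x: "x \<in> {\<tau>\<in>C 2. inc \<tau> \<sigma> \<noteq> 0}"
            then have "\<exists>s\<in>snd x. snd \<sigma> = snd x - {s}"
              by (auto simp: inc_def cox_inc_def split: if_splits)
            then have "t \<in> snd x" using tsig by auto
            then show "x \<in> {\<tau>\<in>R 2. inc \<tau> \<sigma> \<noteq> 0}"
              using x by (auto simp: R_def ruin_rel_cells_def C_def)
          qed
          have m: "0 < \<mu> \<sigma>" using mub \<sigma>C by blast
          have "(1 / \<mu> \<sigma>) * (\<Sum>\<tau>\<in>{\<tau>\<in>C 2. inc \<tau> \<sigma> \<noteq> 0}. inc \<tau> \<sigma> * f \<tau> * \<mu> \<tau>) = 0"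
            using cyc[rule_format, of \<sigma>] \<sigma>C by (simp add: wbd_def)
          then have z: "(\<Sum>\<tau>\<in>{\<tau>\<in>C 2. inc \<tau> \<sigma> \<noteq> 0}. inc \<tau> \<sigma> * f \<tau> * \<mu> \<tau>) = 0" using m by simp
          have "(\<Sum>\<tau>\<in>{\<tau>\<in>R 2. inc \<tau> \<sigma> \<noteq> 0}. inc \<tau> \<sigma> * h \<tau> * \<mu>1 \<tau>)
              = (\<Sum>\<tau>\<in>{\<tau>\<in>C 2. inc \<tau> \<sigma> \<noteq> 0}. inc \<tau> \<sigma> * f \<tau> * \<mu> \<tau>)"
            unfolding sets[symmetric] by (rule sum.cong) (auto simp: h_def mu1)
          then show ?thesis using True z by (simp add: wbd_def)
        qed
      qed
      have small: "l2normsq R \<mu>1 2 h < e" if e: "e > 0" for e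
      proof -
        obtain g where "g \<in> l2chains R \<mu>1 (Suc 2)"
          and lt: "l2normsq R \<mu>1 2 (\<lambda>\<sigma>. h \<sigma> - wbd R \<mu>1 inc (Suc 2) g \<sigma>) < e"
          using hyp hl hc e unfolding red_l2_hom_vanishes_def by blast
        have "\<And>\<sigma>. wbd R \<mu>1 inc (Suc 2) g \<sigma> = 0" using R3 by (simp add: wbd_def)
        then show ?thesis using lt by simp
      qed
      have le0: "l2normsq R \<mu>1 2 h \<le> 0"
      proof (rule ccontr)
        assume "\<not> l2normsq R \<mu>1 2 h \<le> 0"
        then have "l2normsq R \<mu>1 2 h > 0" by simp
        from small[OF this] show False by simp
      qed
      have \<tau>R: "\<tau> \<in> R 2" using \<tau> t by (auto simp: R_def ruin_rel_cells_def C_def)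
      have "(\<Sum>\<^sub>\<infinity>\<sigma>\<in>{\<tau>}. (h \<sigma>)\<^sup>2 * \<mu>1 \<sigma>) \<le> (\<Sum>\<^sub>\<infinity>\<sigma>\<in>R 2. (h \<sigma>)\<^sup>2 * \<mu>1 \<sigma>)"
        by (rule infsum_mono_neutral) (use hs \<tau>R mu1 in auto)
      moreover have "(\<Sum>\<^sub>\<infinity>\<sigma>\<in>{\<tau>}. (h \<sigma>)\<^sup>2 * \<mu>1 \<sigma>) = (h \<tau>)\<^sup>2" using mu1[OF \<tau>R] by simp
      ultimately have "(h \<tau>)\<^sup>2 \<le> 0" using le0 unfolding l2normsq_def by linarith
      then have "(h \<tau>)\<^sup>2 = 0" by (meson order_antisym zero_le_power2)
      then have "h \<tau> = 0" by simp
      then have "f \<tau> * \<mu> \<tau> = 0" using \<tau>R by (simp add: h_def)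
      then show ?thesis using mub[OF \<tau>] by simp
    qed
    show "\<exists>g\<in>l2chains C \<mu> (Suc 2).
            l2normsq C \<mu> 2 (\<lambda>\<sigma>. f \<sigma> - wbd C \<mu> inc (Suc 2) g \<sigma>) < \<epsilon>"
    proof (intro bexI[of _ "\<lambda>_. 0"])
      show "(\<lambda>_. 0) \<in> l2chains C \<mu> (Suc 2)" by (simp add: l2chains_def)
      have "l2normsq C \<mu> 2 (\<lambda>\<sigma>. f \<sigma> - wbd C \<mu> inc (Suc 2) (\<lambda>_. 0) \<sigma>) = 0"
        unfolding l2normsq_def by (rule infsum_0) (simp add: key wbd_def)
      then show "l2normsq C \<mu> 2 (\<lambda>\<sigma>. f \<sigma> - wbd C \<mu> inc (Suc 2) (\<lambda>_. 0) \<sigma>) < \<epsilon>" using eps by simp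
    qed
  qed
qed

end
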